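(* For any quiver $G$, the explosion $X(G)$ equipped with the covering map $p_G : X(G)\to G$ is the epi-projective cover of $G$; that is, $X(G)$ is epi-projective and $p_G$ is an epi-coessential epimorphism.
   Context: A quiver is a quadruple $(V,E,\sigma,\tau)$ with $V,E$ sets and $\sigma,\tau : E \to V$ functions (source and target). A quiver homomorphism is a pair of functions on vertices and edges commuting with sources and targets; $\mathbf{Quiv}$ is the category of quivers, composition componentwise. A homomorphism is epic iff its vertex and edge maps are surjective. A quiver $P$ is epi-projective if for every epic $\phi : A\to B$ and every $\psi : P\to B$ there is $\gamma : P\to A$ with $\phi\circ\gamma=\psi$. An epic $\phi : G\to H$ is epi-coessential if for every homomorphism $\alpha : A\to G$, $\phi\circ\alpha$ epic implies $\alpha$ epic. An epi-projective cover of $G$ is an epi-projective quiver $P$ with an epi-coessential homomorphism $P\to G$. A vertex $v$ is independent if no edge has $v$ as source or target; $\mathrm{indep}(G)$ is the set of independent vertices. For a set $S$, $I(S)$ is the quiver with vertex set $S$ and no edges; $M(T)$ has vertex set $\{0,1\}\times T$, edge set $T$, source $t\mapsto(0,t)$, target $t\mapsto(1,t)$. The explosion is $X(G):=I(\mathrm{indep}(G))\amalg M(E(G))$ (disjoint union of quivers). The covering map $p_G : X(G)\to G$ is the unique homomorphism which on $I(\mathrm{indep}(G))$ sends each independent vertex $v$ to $v$, and on $M(E(G))$ is the identity on edges and sends $(0,e)\mapsto\sigma_G(e)$, $(1,e)\mapsto\tau_G(e)$. *)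

theory Defs
  imports Main
begin

record ('v, 'e) quiver =
  verts :: "'v set"
  edges :: "'e set"
  src   :: "'e \<Rightarrow> 'v"
  tgt   :: "'e \<Rightarrow> 'v"

definition is_quiver :: "('v, 'e) quiver \<Rightarrow> bool" where
  "is_quiver Q \<longleftrightarrow> (\<forall>e\<in>edges Q. src Q e \<in> verts Q \<and> tgt Q e \<in> verts Q)"

text \<open>A homomorphism is a pair (vertex map, edge map); only values on the carriers matter.\<close>
type_synonym ('v1, 'e1, 'v2, 'e2) qhom = "('v1 \<Rightarrow> 'v2) \<times> ('e1 \<Rightarrow> 'e2)"

definition is_hom :: "('v1, 'e1, 'v2, 'e2) qhom \<Rightarrow> ('v1, 'e1) quiver \<Rightarrow> ('v2, 'e2) quiver \<Rightarrow> bool" where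
  "is_hom f A B \<longleftrightarrow>
     (\<forall>v\<in>verts A. fst f v \<in> verts B) \<and>
     (\<forall>e\<in>edges A. snd f e \<in> edges B \<and>
                    src B (snd f e) = fst f (src A e) \<and>
                    tgt B (snd f e) = fst f (tgt A e))"

definition hcomp :: "('v2, 'e2, 'v3, 'e3) qhom \<Rightarrow> ('v1, 'e1, 'v2, 'e2) qhom \<Rightarrow> ('v1, 'e1, 'v3, 'e3) qhom" where
  "hcomp g f = (fst g \<circ> fst f, snd g \<circ> snd f)"

definition hom_eq :: "('v1, 'e1) quiver \<Rightarrow> ('v1, 'e1, 'v2, 'e2) qhom \<Rightarrow> ('v1, 'e1, 'v2, 'e2) qhom \<Rightarrow> bool" where
  "hom_eq A f g \<longleftrightarrow> (\<forall>v\<in>verts A. fst f v = fst g v) \<and> (\<forall>e\<in>edges A. snd f e = snd g e)"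

definition epic :: "('v1, 'e1, 'v2, 'e2) qhom \<Rightarrow> ('v1, 'e1) quiver \<Rightarrow> ('v2, 'e2) quiver \<Rightarrow> bool" where
  "epic f A B \<longleftrightarrow> is_hom f A B \<and> fst f ` verts A = verts B \<and> snd f ` edges A = edges B"

text \<open>Epi-projectivity of P, tested against all quivers A, B of the (arbitrary) types
  of the type variables; a theorem quantifying over A B with free type variables
  thereby ranges over quivers of every size.\<close>
definition epi_projective_wrt :: "('v, 'e) quiver \<Rightarrow> ('va, 'ea) quiver \<Rightarrow> ('vb, 'eb) quiver \<Rightarrow> bool" where
  "epi_projective_wrt P A B \<longleftrightarrow>
     (\<forall>\<phi> \<psi>. epic \<phi> A B \<and> is_hom \<psi> P B \<longrightarrow>
        (\<exists>\<gamma>. is_hom \<gamma> P A \<and> hom_eq P (hcomp \<phi> \<gamma>) \<psi>))"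

definition epi_coessential_wrt :: "('v1, 'e1, 'v2, 'e2) qhom \<Rightarrow> ('v1, 'e1) quiver \<Rightarrow> ('v2, 'e2) quiver \<Rightarrow> ('va, 'ea) quiver \<Rightarrow> bool" where
  "epi_coessential_wrt \<phi> G H A \<longleftrightarrow>
     epic \<phi> G H \<and>
     (\<forall>\<alpha>. is_hom \<alpha> A G \<and> epic (hcomp \<phi> \<alpha>) A H \<longrightarrow> epic \<alpha> A G)"

definition indep :: "('v, 'e) quiver \<Rightarrow> 'v set" where
  "indep G = {v \<in> verts G. \<forall>e\<in>edges G. src G e \<noteq> v \<and> tgt G e \<noteq> v}"

definition Iq :: "'a set \<Rightarrow> ('a, 'b) quiver" where
  "Iq S = \<lparr>verts = S, edges = {}, src = (\<lambda>_. undefined), tgt = (\<lambda>_. undefined)\<rparr>"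

definition Mq :: "'t set \<Rightarrow> (nat \<times> 't, 't) quiver" where
  "Mq T = \<lparr>verts = {0, 1} \<times> T, edges = T, src = (\<lambda>t. (0, t)), tgt = (\<lambda>t. (1, t))\<rparr>"

definition qunion :: "('v1, 'e1) quiver \<Rightarrow> ('v2, 'e2) quiver \<Rightarrow> ('v1 + 'v2, 'e1 + 'e2) quiver" where
  "qunion A B = \<lparr>verts = Inl ` verts A \<union> Inr ` verts B,
                 edges = Inl ` edges A \<union> Inr ` edges B,
                 src = case_sum (\<lambda>e. Inl (src A e)) (\<lambda>e. Inr (src B e)),
                 tgt = case_sum (\<lambda>e. Inl (tgt A e)) (\<lambda>e. Inr (tgt B e))\<rparr>"

definition explosion :: "('v, 'e) quiver \<Rightarrow> ('v + nat \<times> 'e, 'e + 'e) quiver" where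
  "explosion G = qunion (Iq (indep G)) (Mq (edges G))"

definition cover_map :: "('v, 'e) quiver \<Rightarrow> ('v + nat \<times> 'e, 'e + 'e, 'v, 'e) qhom" where
  "cover_map G =
     (case_sum (\<lambda>v. v) (\<lambda>(i, e). if i = 0 then src G e else tgt G e),
      case_sum (\<lambda>_. undefined) (\<lambda>e. e))"

end

theory Submission
  imports Defs
begin

lemma expl_simps:
  "verts (explosion G) = Inl ` indep G \<union> Inr ` ({0,1} \<times> edges G)"
  "edges (explosion G) = Inr ` edges G"
  "src (explosion G) (Inr e) = Inr (0, e)"
  "tgt (explosion G) (Inr e) = Inr (1, e)"
  by (auto simp: explosion_def qunion_def Iq_def Mq_def)

lemma proj:
  fixes G :: "('v, 'e) quiver" and A :: "('va, 'ea) quiver" and B :: "('vb, 'eb) quiver"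
  assumes qA: "is_quiver A"
  shows "epi_projective_wrt (explosion G) A B"
  unfolding epi_projective_wrt_def
proof (intro allI impI, elim conjE)
  fix \<phi> :: "('va, 'ea, 'vb, 'eb) qhom" and \<psi>
  assume ep: "epic \<phi> A B" and hp: "is_hom \<psi> (explosion G) B"
  define ge where "ge e = (SOME a. a \<in> edges A \<and> snd \<phi> a = snd \<psi> (Inr e))" for e
  define gv :: "'v + nat \<times> 'e \<Rightarrow> 'va" where "gv x = (case x of Inl v \<Rightarrow> (SOME a. a \<in> verts A \<and> fst \<phi> a = fst \<psi> (Inl v))
      | Inr (i, e) \<Rightarrow> (if i = 0 then src A (ge e) else tgt A (ge e)))" for x
  define gE :: "'e + 'e \<Rightarrow> 'ea" where "gE x = (case x of Inl _ \<Rightarrow> undefined | Inr e \<Rightarrow> ge e)" for x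
  have ge: "ge e \<in> edges A \<and> snd \<phi> (ge e) = snd \<psi> (Inr e)" if "e \<in> edges G" for e
  proof -
    have "snd \<psi> (Inr e) \<in> edges B" using hp that by (auto simp: is_hom_def expl_simps)
    then have "\<exists>a. a \<in> edges A \<and> snd \<phi> a = snd \<psi> (Inr e)" using ep unfolding epic_def by (metis (no_types, lifting) imageE)
    then show ?thesis unfolding ge_def by (rule someI_ex)
  qed
  have gl: "(SOME a. a \<in> verts A \<and> fst \<phi> a = fst \<psi> (Inl v)) \<in> verts A \<and>
            fst \<phi> (SOME a. a \<in> verts A \<and> fst \<phi> a = fst \<psi> (Inl v)) = fst \<psi> (Inl v)"
    if "v \<in> indep G" for v
  proof -
    have "fst \<psi> (Inl v) \<in> verts B" using hp that by (auto simp: is_hom_def expl_simps)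
    then have "\<exists>a. a \<in> verts A \<and> fst \<phi> a = fst \<psi> (Inl v)" using ep unfolding epic_def by (metis (no_types, lifting) imageE)
    then show ?thesis by (rule someI_ex)
  qed
  have hphi: "is_hom \<phi> A B" using ep by (simp add: epic_def)
  have psiE: "src B (snd \<psi> (Inr e)) = fst \<psi> (Inr (0, e)) \<and> tgt B (snd \<psi> (Inr e)) = fst \<psi> (Inr (1, e))"
    if "e \<in> edges G" for e
    using hp that by (auto simp: is_hom_def expl_simps)
  show "\<exists>\<gamma>. is_hom \<gamma> (explosion G) A \<and> hom_eq (explosion G) (hcomp \<phi> \<gamma>) \<psi>"
  proof (intro exI conjI)
    show "is_hom (gv, gE) (explosion G) A"
      unfolding is_hom_def
    proof (intro conjI ballI)
      fix x assume "x \<in> verts (explosion G)"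
      then consider v where "v \<in> indep G" "x = Inl v"
        | e where "e \<in> edges G" "x = Inr (0, e)" | e where "e \<in> edges G" "x = Inr (1, e)"
        by (auto simp: expl_simps)
      then show "fst (gv, gE) x \<in> verts A"
      proof cases
        case 1 then show ?thesis using gl[of v] by (simp add: gv_def)
      next
        case (2 e) then show ?thesis using ge[of e] qA by (simp add: gv_def is_quiver_def)
      next
        case (3 e) then show ?thesis using ge[of e] qA by (simp add: gv_def is_quiver_def)
      qed
    next
      fix x assume "x \<in> edges (explosion G)"
      then obtain e where e: "e \<in> edges G" "x = Inr e" by (auto simp: expl_simps)
      show "snd (gv, gE) x \<in> edges A" using e ge[of e] by (simp add: gE_def)
      show "src A (snd (gv, gE) x) = fst (gv, gE) (src (explosion G) x)"
        using e by (simp add: gE_def gv_def expl_simps)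
      show "tgt A (snd (gv, gE) x) = fst (gv, gE) (tgt (explosion G) x)"
        using e by (simp add: gE_def gv_def expl_simps)
    qed
    show "hom_eq (explosion G) (hcomp \<phi> (gv, gE)) \<psi>"
      unfolding hom_eq_def hcomp_def fst_conv snd_conv comp_apply
    proof (intro conjI ballI)
      fix x assume "x \<in> verts (explosion G)"
      then consider v where "v \<in> indep G" "x = Inl v"
        | e where "e \<in> edges G" "x = Inr (0, e)" | e where "e \<in> edges G" "x = Inr (1, e)"
        by (auto simp: expl_simps)
      then show "fst \<phi> (gv x) = fst \<psi> x"
      proof cases
        case 1 then show ?thesis using gl by (simp add: gv_def)
      next
        case (2 e)
        then show ?thesis using ge[of e] psiE[of e] hphi qA
          by (auto simp: gv_def is_hom_def is_quiver_def)
      next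
        case (3 e)
        then show ?thesis using ge[of e] psiE[of e] hphi qA
          by (auto simp: gv_def is_hom_def is_quiver_def)
      qed
    next
      fix x assume "x \<in> edges (explosion G)"
      then show "snd \<phi> (gE x) = snd \<psi> x"
        using ge by (auto simp: expl_simps gE_def)
    qed
  qed
qed

lemma cover_hom:
  assumes "is_quiver G"
  shows "is_hom (cover_map G) (explosion G) G"
  using assms by (auto simp: is_hom_def cover_map_def expl_simps indep_def is_quiver_def)

lemma cover_epic:
  assumes "is_quiver G"
  shows "epic (cover_map G) (explosion G) G"
  unfolding epic_def
proof (intro conjI)
  show "is_hom (cover_map G) (explosion G) G" using cover_hom[OF assms] .
  show "fst (cover_map G) ` verts (explosion G) = verts G"
  proof
    show "fst (cover_map G) ` verts (explosion G) \<subseteq> verts G"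
      using assms by (auto simp: cover_map_def expl_simps indep_def is_quiver_def)
    show "verts G \<subseteq> fst (cover_map G) ` verts (explosion G)"
    proof
      fix v assume v: "v \<in> verts G"
      show "v \<in> fst (cover_map G) ` verts (explosion G)"
      proof (cases "v \<in> indep G")
        case True
        then show ?thesis by (force simp: cover_map_def expl_simps)
      next
        case False
        then obtain e where e: "e \<in> edges G" "src G e = v \<or> tgt G e = v"
          using v by (auto simp: indep_def)
        from e(2) show ?thesis
        proof
          assume "src G e = v"
          then show ?thesis using e(1)
            by (auto simp: cover_map_def expl_simps image_iff intro!: bexI[of _ "Inr (0, e)"])
        next
          assume "tgt G e = v"
          then show ?thesis using e(1)
            by (auto simp: cover_map_def expl_simps image_iff intro!: bexI[of _ "Inr (1, e)"])
        qed
      qed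
    qed
  qed
  show "snd (cover_map G) ` edges (explosion G) = edges G"
    unfolding expl_simps image_image by (simp add: cover_map_def)
qed

lemma coess:
  fixes A :: "('vc, 'ec) quiver"
  assumes qG: "is_quiver G" and qA: "is_quiver A"
  shows "epi_coessential_wrt (cover_map G) (explosion G) G A"
  unfolding epi_coessential_wrt_def
proof (intro conjI allI impI)
  show "epic (cover_map G) (explosion G) G" using cover_epic[OF qG] .
  fix \<alpha> assume "is_hom \<alpha> A (explosion G) \<and> epic (hcomp (cover_map G) \<alpha>) A G"
  then have ha: "is_hom \<alpha> A (explosion G)" and ec: "epic (hcomp (cover_map G) \<alpha>) A G" by auto
  have ea: "\<exists>a\<in>edges A. snd \<alpha> a = Inr e" if "e \<in> edges G" for e
  proof -
    have "e \<in> (snd (cover_map G) \<circ> snd \<alpha>) ` edges A"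
      using ec that unfolding epic_def hcomp_def by simp
    then obtain a where a: "a \<in> edges A" "snd (cover_map G) (snd \<alpha> a) = e" by auto
    have "snd \<alpha> a \<in> Inr ` edges G" using ha a(1) by (auto simp: is_hom_def expl_simps)
    then have "snd \<alpha> a = Inr e" using a(2) by (auto simp: cover_map_def)
    then show ?thesis using a(1) by blast
  qed
  show "epic \<alpha> A (explosion G)"
    unfolding epic_def
  proof (intro conjI)
    show "is_hom \<alpha> A (explosion G)" using ha .
    show "snd \<alpha> ` edges A = edges (explosion G)"
    proof
      show "snd \<alpha> ` edges A \<subseteq> edges (explosion G)" using ha by (auto simp: is_hom_def)
      show "edges (explosion G) \<subseteq> snd \<alpha> ` edges A"
      proof
        fix x assume "x \<in> edges (explosion G)"
        then obtain e where "e \<in> edges G" "x = Inr e" by (auto simp: expl_simps)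
        then show "x \<in> snd \<alpha> ` edges A" using ea[of e] by force
      qed
    qed
    show "fst \<alpha> ` verts A = verts (explosion G)"
    proof
      show "fst \<alpha> ` verts A \<subseteq> verts (explosion G)" using ha by (auto simp: is_hom_def)
      show "verts (explosion G) \<subseteq> fst \<alpha> ` verts A"
      proof
        fix x assume "x \<in> verts (explosion G)"
        then consider v where "v \<in> indep G" "x = Inl v"
          | i e where "i \<in> {0,1::nat}" "e \<in> edges G" "x = Inr (i, e)"
          by (auto simp: expl_simps)
        then show "x \<in> fst \<alpha> ` verts A"
        proof cases
          case 1
          then have "v \<in> verts G" by (simp add: indep_def)
          then have "v \<in> (fst (cover_map G) \<circ> fst \<alpha>) ` verts A"
            using ec unfolding epic_def hcomp_def by simp
          then obtain a where a: "a \<in> verts A" "fst (cover_map G) (fst \<alpha> a) = v" by auto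
          have m: "fst \<alpha> a \<in> verts (explosion G)" using ha a(1) by (auto simp: is_hom_def)
          have "fst \<alpha> a = Inl v"
          proof -
            { fix i e assume "e \<in> edges G" "fst \<alpha> a = Inr (i, e)"
              then have "v = src G e \<or> v = tgt G e" using a(2) by (auto simp: cover_map_def split: if_splits)
              then have False using 1(1) \<open>e \<in> edges G\<close> unfolding indep_def by blast }
            then show ?thesis using m a(2) unfolding expl_simps by (auto simp: cover_map_def)
          qed
          then show ?thesis using a(1) 1 by (metis image_eqI)
        next
          case (2 i e)
          obtain a where a: "a \<in> edges A" "snd \<alpha> a = Inr e" using ea 2(2) by blast
          have "fst \<alpha> (src A a) = Inr (0, e)" "fst \<alpha> (tgt A a) = Inr (1, e)"
          proof -
            have "src (explosion G) (snd \<alpha> a) = fst \<alpha> (src A a)"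
                 "tgt (explosion G) (snd \<alpha> a) = fst \<alpha> (tgt A a)"
              using ha a(1) unfolding is_hom_def by blast+
            then show "fst \<alpha> (src A a) = Inr (0, e)" "fst \<alpha> (tgt A a) = Inr (1, e)"
              using a(2) by (simp_all add: expl_simps)
          qed
          moreover have "src A a \<in> verts A" "tgt A a \<in> verts A" using qA a(1) by (auto simp: is_quiver_def)
          ultimately show ?thesis using 2 by (auto simp: image_iff) (metis)+
        qed
      qed
    qed
  qed
qed

theorem mainTheorem8:
  fixes G :: "('v, 'e) quiver"
  assumes "is_quiver G"
  shows "(\<forall>(A :: ('va, 'ea) quiver) (B :: ('vb, 'eb) quiver).
            is_quiver A \<and> is_quiver B \<longrightarrow> epi_projective_wrt (explosion G) A B)
       \<and> is_hom (cover_map G) (explosion G) G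
       \<and> (\<forall>A :: ('vc, 'ec) quiver. is_quiver A \<longrightarrow> epi_coessential_wrt (cover_map G) (explosion G) G A)"
  using proj cover_hom[OF assms] coess[OF assms] by blast

end
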